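(* Let $\mathfrak g$ be of type $A_n$. Then $(\mathcal B(\infty),\mathrm{wt},\varepsilon_i^\ast,\varphi_i^\ast,\widetilde e_i^\ast,\widetilde f_i^\ast)_{i\in I}$ is a highest weight $\mathfrak g$-crystal.
   Context: $I=\{1,\dots,n\}$, $\langle h_i,\alpha_j\rangle=2$ if $i=j$, $-1$ if $|i-j|=1$, $0$ otherwise. $\mathcal I=\{(s,t)\in\mathbb Z_{>0}\times I:s+t\le n+1\}$; $\mathcal B(\infty)$ is the set of $b=(b_{s,t})_{(s,t)\in\mathcal I}\in\mathbb Z_{\ge0}^{\mathcal I}$ with $b_{1,k}\ge b_{2,k-1}\ge\dots\ge b_{k,1}$ for $1\le k\le n$. Convention: $b_{s,t}=0$, $\mathbf e_{s,t}=0$ for $(s,t)\notin\mathcal I$ ($\mathbf e_{s,t}$ standard basis vectors). $\partial^\ast_{s,t}(b)=b_{s-1,t}-b_{s-1,t+1}-b_{s,t-1}+b_{s,t}$. For $i\in I$, $1\le k\le i$: $\Sigma^\ast_k(b)=\sum_{t=1}^k\partial^\ast_{t,i+1-t}(b)$; $\varepsilon_i^\ast(b)=\max_{1\le k\le i}\Sigma^\ast_k(b)$; $m_i^\ast(b)$, $M_i^\ast(b)$ the smallest, largest $k$ attaining the maximum. $\mathrm{wt}(b)=-\sum b_{s,t}\alpha_t$; $\varphi_i^\ast(b)=\varepsilon_i^\ast(b)+\langle h_i,\mathrm{wt}(b)\rangle$; $\widetilde f_i^\ast(b)=b+\sum_{t=1}^{m_i^\ast(b)}(\mathbf e_{t,i+1-t}-\mathbf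 e_{t-1,i+1-t})$; $\widetilde e_i^\ast(b)=b-\sum_{t=1}^{M_i^\ast(b)}(\mathbf e_{t,i+1-t}-\mathbf e_{t-1,i+1-t})$ if $\varepsilon_i^\ast(b)>0$, and $\widetilde e_i^\ast(b)=\mathbf 0$ (formal symbol) otherwise. A crystal is a set $B$ with $\mathrm{wt}:B\to P$, $\widetilde e_i,\widetilde f_i:B\to B\cup\{\mathbf 0\}$, $\varepsilon_i,\varphi_i:B\to\mathbb Z\cup\{-\infty\}$ such that $\varphi_i=\varepsilon_i+\langle h_i,\mathrm{wt}\rangle$; if $\widetilde e_ib\ne\mathbf0$ then $\mathrm{wt}(\widetilde e_ib)=\mathrm{wt}(b)+\alpha_i$, $\varepsilon_i(\widetilde e_ib)=\varepsilon_i(b)-1$, $\varphi_i(\widetilde e_ib)=\varphi_i(b)+1$; if $\widetilde f_ib\ne\mathbf0$ then $\mathrm{wt}(\widetilde f_ib)=\mathrm{wt}(b)-\alpha_i$, $\varepsilon_i(\widetilde f_ib)=\varepsilon_i(b)+1$, $\varphi_i(\widetilde f_ib)=\varphi_i(b)-1$; $\widetilde f_ib=b'$ iff $b=\widetilde e_ib'$; $\varepsilon_i(b)=-\infty$ implies $\widetilde e_ib=\widetilde f_ib=\mathbf0$. It is a highest weight crystal if there is $b_0\in B$ reachable from every $b$ by a sequence of $\widetilde e_i$'s and $\varepsilon_i(b)=\max\{m\ge0:\widetilde e_i^m b\ne\mathbf 0\}$ for all $b,i$. *)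

theory Defs
  imports "HOL-Library.Extended_Real"
begin

text \<open>Weights lambda in P are represented by the integer vector
  i |-> <h_i, lambda> (i in I), extended by 0 outside I; for type A_n this is an
  isomorphism of P with Z^I (coordinates w.r.t. fundamental weights).\<close>

type_synonym weight = "nat \<Rightarrow> int"

definition cartanA :: "nat \<Rightarrow> nat \<Rightarrow> int" where
  "cartanA i j = (if i = j then 2 else if i = j + 1 \<or> j = i + 1 then -1 else 0)"

definition simple_root :: "nat \<Rightarrow> nat \<Rightarrow> weight" where
  "simple_root n j = (\<lambda>i. if i \<in> {1..n} then cartanA i j else 0)"

section \<open>Abstract crystals (None plays the role of the formal symbol 0)\<close>

definition crystal ::
  "nat \<Rightarrow> 'b set \<Rightarrow> ('b \<Rightarrow> weight) \<Rightarrow> (nat \<Rightarrow> 'b \<Rightarrow> 'b option) \<Rightarrow> (nat \<Rightarrow> 'b \<Rightarrow> 'b option)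
    \<Rightarrow> (nat \<Rightarrow> 'b \<Rightarrow> ereal) \<Rightarrow> (nat \<Rightarrow> 'b \<Rightarrow> ereal) \<Rightarrow> bool" where
  "crystal n B wt e f eps phi \<longleftrightarrow>
     (\<forall>b\<in>B. (\<forall>j. j \<notin> {1..n} \<longrightarrow> wt b j = 0)) \<and>
     (\<forall>i\<in>{1..n}. \<forall>b\<in>B.
        (e i b = None \<or> the (e i b) \<in> B) \<and>
        (f i b = None \<or> the (f i b) \<in> B) \<and>
        (eps i b \<noteq> \<infinity> \<and> phi i b \<noteq> \<infinity>) \<and>
        phi i b = eps i b + ereal (of_int (wt b i)) \<and>
        (\<forall>b'. e i b = Some b' \<longrightarrow>
            wt b' = (\<lambda>j. wt b j + simple_root n i j) \<and>
            eps i b' = eps i b - 1 \<and> phi i b' = phi i b + 1) \<and>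
        (\<forall>b'. f i b = Some b' \<longrightarrow>
            wt b' = (\<lambda>j. wt b j - simple_root n i j) \<and>
            eps i b' = eps i b + 1 \<and> phi i b' = phi i b - 1) \<and>
        (\<forall>b'\<in>B. f i b = Some b' \<longleftrightarrow> e i b' = Some b) \<and>
        (eps i b = -\<infinity> \<longrightarrow> e i b = None \<and> f i b = None))"

fun apply_ops :: "(nat \<Rightarrow> 'b \<Rightarrow> 'b option) \<Rightarrow> nat list \<Rightarrow> 'b \<Rightarrow> 'b option" where
  "apply_ops e [] b = Some b"
| "apply_ops e (i # is) b = Option.bind (e i b) (apply_ops e is)"

definition highest_weight_crystal ::
  "nat \<Rightarrow> 'b set \<Rightarrow> ('b \<Rightarrow> weight) \<Rightarrow> (nat \<Rightarrow> 'b \<Rightarrow> 'b option) \<Rightarrow> (nat \<Rightarrow> 'b \<Rightarrow> 'b option)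
    \<Rightarrow> (nat \<Rightarrow> 'b \<Rightarrow> ereal) \<Rightarrow> (nat \<Rightarrow> 'b \<Rightarrow> ereal) \<Rightarrow> bool" where
  "highest_weight_crystal n B wt e f eps phi \<longleftrightarrow>
     crystal n B wt e f eps phi \<and>
     (\<exists>b0\<in>B. \<forall>b\<in>B. \<exists>is. set is \<subseteq> {1..n} \<and> apply_ops e is b = Some b0) \<and>
     (\<forall>b\<in>B. \<forall>i\<in>{1..n}. \<exists>m::nat.
        apply_ops e (replicate m i) b \<noteq> None \<and>
        (\<forall>k. apply_ops e (replicate k i) b \<noteq> None \<longrightarrow> k \<le> m) \<and>
        eps i b = ereal (of_nat m))"

text \<open>Elements b = (b_{s,t}) are functions nat => nat => int, b s t = b_{s,t},
  required to vanish outside the index set \<I> (the convention b_{s,t} = 0).\<close>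

definition Iset :: "nat \<Rightarrow> (nat \<times> nat) set" where
  "Iset n = {(s, t). 1 \<le> s \<and> 1 \<le> t \<and> t \<le> n \<and> s + t \<le> n + 1}"

definition Binf :: "nat \<Rightarrow> (nat \<Rightarrow> nat \<Rightarrow> int) set" where
  "Binf n = {b. (\<forall>s t. (s, t) \<notin> Iset n \<longrightarrow> b s t = 0) \<and>
                (\<forall>s t. (s, t) \<in> Iset n \<longrightarrow> b s t \<ge> 0) \<and>
                (\<forall>k s. 1 \<le> k \<and> k \<le> n \<and> 1 \<le> s \<and> s < k \<longrightarrow>
                       b s (k + 1 - s) \<ge> b (s + 1) (k - s))}"

definition evec :: "nat \<Rightarrow> nat \<Rightarrow> nat \<Rightarrow> nat \<Rightarrow> nat \<Rightarrow> int" where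
  "evec n s t = (\<lambda>x y. if (x, y) = (s, t) \<and> (s, t) \<in> Iset n then 1 else 0)"

text \<open>b_{s,t} with the convention that it is 0 outside \<I> (also for index 0).\<close>
definition bval :: "nat \<Rightarrow> (nat \<Rightarrow> nat \<Rightarrow> int) \<Rightarrow> int \<Rightarrow> int \<Rightarrow> int" where
  "bval n b s t = (if s \<ge> 1 \<and> t \<ge> 1 \<and> (nat s, nat t) \<in> Iset n then b (nat s) (nat t) else 0)"

definition dstar :: "nat \<Rightarrow> (nat \<Rightarrow> nat \<Rightarrow> int) \<Rightarrow> int \<Rightarrow> int \<Rightarrow> int" where
  "dstar n b s t = bval n b (s - 1) t - bval n b (s - 1) (t + 1) - bval n b s (t - 1) + bval n b s t"

definition Sigstar :: "nat \<Rightarrow> nat \<Rightarrow> (nat \<Rightarrow> nat \<Rightarrow> int) \<Rightarrow> nat \<Rightarrow> int" where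
  "Sigstar n i b k = (\<Sum>t = 1..k. dstar n b (int t) (int i + 1 - int t))"

definition epsstar :: "nat \<Rightarrow> nat \<Rightarrow> (nat \<Rightarrow> nat \<Rightarrow> int) \<Rightarrow> int" where
  "epsstar n i b = Max (Sigstar n i b ` {1..i})"

definition mstar :: "nat \<Rightarrow> nat \<Rightarrow> (nat \<Rightarrow> nat \<Rightarrow> int) \<Rightarrow> nat" where
  "mstar n i b = (LEAST k. k \<in> {1..i} \<and> Sigstar n i b k = epsstar n i b)"

definition Mstar :: "nat \<Rightarrow> nat \<Rightarrow> (nat \<Rightarrow> nat \<Rightarrow> int) \<Rightarrow> nat" where
  "Mstar n i b = (GREATEST k. k \<in> {1..i} \<and> Sigstar n i b k = epsstar n i b)"

definition wtB :: "nat \<Rightarrow> (nat \<Rightarrow> nat \<Rightarrow> int) \<Rightarrow> weight" where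
  "wtB n b = (\<lambda>i. if i \<in> {1..n}
                  then - (\<Sum>(s, t)\<in>Iset n. b s t * cartanA i t) else 0)"

definition phistar :: "nat \<Rightarrow> nat \<Rightarrow> (nat \<Rightarrow> nat \<Rightarrow> int) \<Rightarrow> int" where
  "phistar n i b = epsstar n i b + wtB n b i"

definition stringvec :: "nat \<Rightarrow> nat \<Rightarrow> nat \<Rightarrow> nat \<Rightarrow> nat \<Rightarrow> int" where
  "stringvec n i m = (\<lambda>x y. \<Sum>t = 1..m. evec n t (i + 1 - t) x y - evec n (t - 1) (i + 1 - t) x y)"

definition fstar :: "nat \<Rightarrow> nat \<Rightarrow> (nat \<Rightarrow> nat \<Rightarrow> int) \<Rightarrow> (nat \<Rightarrow> nat \<Rightarrow> int) option" where
  "fstar n i b = Some (\<lambda>x y. b x y + stringvec n i (mstar n i b) x y)"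

definition estar :: "nat \<Rightarrow> nat \<Rightarrow> (nat \<Rightarrow> nat \<Rightarrow> int) \<Rightarrow> (nat \<Rightarrow> nat \<Rightarrow> int) option" where
  "estar n i b = (if epsstar n i b > 0
                  then Some (\<lambda>x y. b x y - stringvec n i (Mstar n i b) x y) else None)"

end

theory Submission
  imports Defs
begin

definition supp0 :: "nat \<Rightarrow> (nat \<Rightarrow> nat \<Rightarrow> int) \<Rightarrow> bool" where
  "supp0 n b \<longleftrightarrow> (\<forall>s t. (s, t) \<notin> Iset n \<longrightarrow> b s t = 0)"

lemma Binf_supp: "b \<in> Binf n \<Longrightarrow> supp0 n b"
  by (simp add: Binf_def supp0_def)

lemma Binf_nonneg: "b \<in> Binf n \<Longrightarrow> b s t \<ge> 0"
  unfolding Binf_def by (cases "(s,t) \<in> Iset n") auto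

lemma bval_eq: "supp0 n b \<Longrightarrow> s \<ge> 0 \<Longrightarrow> t \<ge> 0 \<Longrightarrow> bval n b s t = b (nat s) (nat t)"
  unfolding bval_def supp0_def Iset_def by auto

lemma Sig_closed:
  assumes "supp0 n b" "k \<le> i"
  shows "Sigstar n i b k = b k (i+1-k) - b k (i-k)"
  using assms(2)
proof (induction k)
  case 0
  have "b 0 (i+1) = 0" "b 0 i = 0" using assms(1) by (auto simp: supp0_def Iset_def)
  then show ?case by (simp add: Sigstar_def)
next
  case (Suc k)
  obtain j where j: "i = k + 1 + j" using Suc.prems by (metis add.commute le_Suc_ex Suc_eq_plus1 add.left_commute)
  have "Sigstar n i b (Suc k) = Sigstar n i b k + dstar n b (int (Suc k)) (int i + 1 - int (Suc k))"
    by (simp add: Sigstar_def)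
  also have "int i + 1 - int (Suc k) = int (j+1)" using j by simp
  also have "dstar n b (int (Suc k)) (int (j+1)) = b k (j+1) - b k (j+2) - b (Suc k) j + b (Suc k) (j+1)"
    unfolding dstar_def using assms(1)
    by (simp add: bval_eq nat_add_distrib add.commute)
  finally show ?case using Suc j by simp
qed

lemma sv_Suc: "stringvec n i (Suc m) x y = stringvec n i m x y + evec n (Suc m) (i - m) x y - evec n m (i - m) x y"
  by (simp add: stringvec_def)

lemma sv_closed:
  assumes "1 \<le> i" "i \<le> n" "m \<le> i"
  shows "stringvec n i m x y = (if 1 \<le> x \<and> x \<le> m \<and> x + y = i + 1 then 1 else 0)
              - (if 1 \<le> x \<and> x < m \<and> x + y = i then 1 else 0)"
  using assms(3)
proof (induction m)
  case 0
  then show ?case by (simp add: stringvec_def)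
next
  case (Suc m)
  then show ?case using assms unfolding sv_Suc by (auto simp: evec_def Iset_def)
qed

lemma finite_Iset: "finite (Iset n)"
proof -
  have "Iset n \<subseteq> {0..n+1} \<times> {0..n}" by (auto simp: Iset_def)
  then show ?thesis by (rule finite_subset) simp
qed

lemma evec_sum:
  "(\<Sum>(x,y)\<in>Iset n. evec n s t x y * g y) = (if (s,t) \<in> Iset n then g t else 0)"
proof -
  have "(\<lambda>(x,y). evec n s t x y * g y) = (\<lambda>p. if p = (s,t) then (if (s,t) \<in> Iset n then g t else 0) else 0)"
    by (auto simp: evec_def fun_eq_iff)
  then show ?thesis by (simp add: sum.delta finite_Iset)
qed

lemma sv_sum:
  assumes "1 \<le> i" "i \<le> n" "1 \<le> m" "m \<le> i"
  shows "(\<Sum>(x,y)\<in>Iset n. stringvec n i m x y * g y) = g i"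
proof -
  have "\<forall>m. Suc m \<le> i \<longrightarrow> (\<Sum>(x,y)\<in>Iset n. stringvec n i (Suc m) x y * g y) = g i"
  proof
    fix m show "Suc m \<le> i \<longrightarrow> (\<Sum>(x,y)\<in>Iset n. stringvec n i (Suc m) x y * g y) = g i"
    proof (induction m)
      case 0
      have "(\<lambda>(x,y). stringvec n i (Suc 0) x y * g y) = (\<lambda>(x,y). evec n 1 i x y * g y)"
        by (auto simp: stringvec_def evec_def Iset_def fun_eq_iff)
      then have "(\<Sum>(x,y)\<in>Iset n. stringvec n i (Suc 0) x y * g y) = (if (1,i) \<in> Iset n then g i else 0)"
        by (simp only: evec_sum One_nat_def)
      then show ?case using assms by (simp add: Iset_def)
    next
      case (Suc m)
      have "(\<lambda>(x,y). stringvec n i (Suc (Suc m)) x y * g y) =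
         (\<lambda>p. (\<lambda>(x,y). stringvec n i (Suc m) x y * g y) p + (\<lambda>(x,y). evec n (Suc (Suc m)) (i - Suc m) x y * g y) p
              - (\<lambda>(x,y). evec n (Suc m) (i - Suc m) x y * g y) p)"
        unfolding sv_Suc[of n i "Suc m"] by (auto simp: fun_eq_iff algebra_simps)
      then have "(\<Sum>(x,y)\<in>Iset n. stringvec n i (Suc (Suc m)) x y * g y) =
          (\<Sum>(x,y)\<in>Iset n. stringvec n i (Suc m) x y * g y) + (\<Sum>(x,y)\<in>Iset n. evec n (Suc (Suc m)) (i - Suc m) x y * g y)
          - (\<Sum>(x,y)\<in>Iset n. evec n (Suc m) (i - Suc m) x y * g y)"
        by (simp add: sum.distrib sum_subtractf)
      moreover have "(\<Sum>(x,y)\<in>Iset n. evec n (Suc (Suc m)) (i - Suc m) x y * g y) = (if (Suc (Suc m), i - Suc m) \<in> Iset n then g (i - Suc m) else 0)"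
        "(\<Sum>(x,y)\<in>Iset n. evec n (Suc m) (i - Suc m) x y * g y) = (if (Suc m, i - Suc m) \<in> Iset n then g (i - Suc m) else 0)"
        by (simp_all only: evec_sum)
      moreover have "Suc (Suc m) \<le> i \<Longrightarrow> (Suc (Suc m), i - Suc m) \<in> Iset n \<and> (Suc m, i - Suc m) \<in> Iset n"
        using assms by (auto simp: Iset_def)
      ultimately show ?case using Suc by auto
    qed
  qed
  moreover obtain m' where "m = Suc m'" using assms(3) by (cases m) auto
  ultimately show ?thesis using assms by simp
qed

lemma chain:
  assumes "b \<in> Binf n" "k \<le> n" "1 \<le> s" "s \<le> s'" "s' \<le> k"
  shows "b s' (k+1-s') \<le> b s (k+1-s)"
  using assms(4,5)
proof (induction s' rule: dec_induct)
  case base then show ?case by simp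
next
  case (step s')
  have "b s' (k + 1 - s') \<ge> b (s'+1) (k - s')"
    using assms(1,2,3) step by (auto simp: Binf_def)
  then show ?case using step by simp
qed

lemma ydiag:
  assumes "b \<in> Binf n" "i \<le> n" "1 \<le> s" "s + 1 \<le> i"
  shows "b (s+1) (i - (s+1)) \<le> b s (i - s)"
proof (cases "s + 1 = i")
  case True
  then have "b (s+1) (i - (s+1)) = 0" using assms(1) by (auto simp: Binf_def Iset_def)
  then show ?thesis using Binf_nonneg[OF assms(1)] by simp
next
  case False
  from assms(1) have H: "\<forall>k s. 1 \<le> k \<and> k \<le> n \<and> 1 \<le> s \<and> s < k \<longrightarrow> b s (k+1-s) \<ge> b (s+1) (k-s)"
    by (simp add: Binf_def)
  have c: "1 \<le> i-1 \<and> i-1 \<le> n \<and> 1 \<le> s \<and> s < i-1" using assms False by linarith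
  have "b s (i-1+1-s) \<ge> b (s+1) (i-1-s)" using H[rule_format, OF c] .
  moreover have "i-1+1-s = i - s" "i-1-s = i-(s+1)" using assms by auto
  ultimately show ?thesis by simp
qed

lemma eps_facts:
  assumes "1 \<le> i"
  shows "\<And>k. k \<in> {1..i} \<Longrightarrow> Sigstar n i b k \<le> epsstar n i b"
    and "mstar n i b \<in> {1..i}" "Sigstar n i b (mstar n i b) = epsstar n i b"
    and "\<And>k. k < mstar n i b \<Longrightarrow> k \<in> {1..i} \<Longrightarrow> Sigstar n i b k < epsstar n i b"
    and "Mstar n i b \<in> {1..i}" "Sigstar n i b (Mstar n i b) = epsstar n i b"
    and "\<And>k. Mstar n i b < k \<Longrightarrow> k \<in> {1..i} \<Longrightarrow> Sigstar n i b k < epsstar n i b"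
proof -
  let ?S = "Sigstar n i b" and ?E = "epsstar n i b"
  show le: "\<And>k. k \<in> {1..i} \<Longrightarrow> ?S k \<le> ?E" unfolding epsstar_def by simp
  have "?E \<in> ?S ` {1..i}" unfolding epsstar_def using assms by (intro Max_in) auto
  then obtain k0 where k0: "k0 \<in> {1..i}" "?S k0 = ?E" by auto
  let ?P = "\<lambda>k. k \<in> {1..i} \<and> ?S k = ?E"
  have P0: "?P k0" using k0 by simp
  have "?P (mstar n i b)" unfolding mstar_def by (rule LeastI[of ?P, OF P0])
  then show "mstar n i b \<in> {1..i}" "?S (mstar n i b) = ?E" by auto
  show "\<And>k. k < mstar n i b \<Longrightarrow> k \<in> {1..i} \<Longrightarrow> ?S k < ?E"
  proof -
    fix k assume "k < mstar n i b" "k \<in> {1..i}"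
    then have "\<not> ?P k" using not_less_Least[of k ?P] unfolding mstar_def by blast
    then show "?S k < ?E" using le[of k] \<open>k \<in> {1..i}\<close> by auto
  qed
  have bnd: "\<And>y. ?P y \<Longrightarrow> y \<le> i" by auto
  have "?P (Mstar n i b)" unfolding Mstar_def by (rule GreatestI_nat[of ?P, OF P0 bnd])
  then show "Mstar n i b \<in> {1..i}" "?S (Mstar n i b) = ?E" by auto
  show "\<And>k. Mstar n i b < k \<Longrightarrow> k \<in> {1..i} \<Longrightarrow> ?S k < ?E"
  proof -
    fix k assume "Mstar n i b < k" "k \<in> {1..i}"
    have "?P k \<Longrightarrow> k \<le> Mstar n i b" unfolding Mstar_def by (rule Greatest_le_nat[of ?P, OF _ bnd])
    then show "?S k < ?E" using le[of k] \<open>k \<in> {1..i}\<close> \<open>Mstar n i b < k\<close> by fastforce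
  qed
qed

lemma eps_char:
  assumes "k0 \<in> {1..i}" "Sigstar n i b k0 = E" "\<And>k. k \<in> {1..i} \<Longrightarrow> Sigstar n i b k \<le> E"
  shows "epsstar n i b = E"
  unfolding epsstar_def using assms by (intro Max_eqI) auto

lemma M_char:
  assumes "epsstar n i b = E" "k0 \<in> {1..i}" "Sigstar n i b k0 = E"
    "\<And>k. k \<in> {1..i} \<Longrightarrow> k0 < k \<Longrightarrow> Sigstar n i b k < E"
  shows "Mstar n i b = k0"
  unfolding Mstar_def using assms by (intro Greatest_equality) force+

lemma m_char:
  assumes "epsstar n i b = E" "k0 \<in> {1..i}" "Sigstar n i b k0 = E"
    "\<And>k. k \<in> {1..i} \<Longrightarrow> k < k0 \<Longrightarrow> Sigstar n i b k < E"
  shows "mstar n i b = k0"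
  unfolding mstar_def using assms by (intro Least_equality) force+

lemma eps_nonneg:
  assumes "b \<in> Binf n" "1 \<le> i" "i \<le> n"
  shows "epsstar n i b \<ge> 0"
proof -
  have "Sigstar n i b i = b i 1 - b i 0" using Sig_closed[OF Binf_supp[OF assms(1)], of i i] by simp
  moreover have "b i 0 = 0" using assms(1) by (auto simp: Binf_def Iset_def)
  ultimately have "Sigstar n i b i \<ge> 0" using Binf_nonneg[OF assms(1)] by simp
  then show ?thesis using eps_facts(1)[OF assms(2), of i n b] assms by simp
qed

lemma sv_out:
  assumes "1 \<le> i" "i \<le> n" "m \<le> i" "(x,y) \<notin> Iset n"
  shows "stringvec n i m x y = 0"
  using assms by (auto simp: sv_closed Iset_def)

lemma supp_plus:
  assumes "supp0 n b" "1 \<le> i" "i \<le> n" "m \<le> i"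
  shows "supp0 n (\<lambda>x y. b x y + stringvec n i m x y)" "supp0 n (\<lambda>x y. b x y - stringvec n i m x y)"
  using assms sv_out[OF assms(2,3,4)] by (auto simp: supp0_def)

lemma Sig_shift:
  assumes "supp0 n b" "1 \<le> i" "i \<le> n" "m \<le> i" "k \<in> {1..i}"
  shows "Sigstar n i (\<lambda>x y. b x y + stringvec n i m x y) k
           = Sigstar n i b k + (if k \<le> m then 1 else 0) + (if k < m then 1 else 0)"
    and "Sigstar n i (\<lambda>x y. b x y - stringvec n i m x y) k
           = Sigstar n i b k - (if k \<le> m then 1 else 0) - (if k < m then 1 else 0)"
  using assms Sig_closed[OF supp_plus(1)[OF assms(1-4)], of k i] Sig_closed[OF supp_plus(2)[OF assms(1-4)], of k i]
    Sig_closed[OF assms(1), of k i]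
  by (auto simp: sv_closed)

lemma wt_shift:
  assumes "1 \<le> i" "i \<le> n" "1 \<le> m" "m \<le> i"
  shows "wtB n (\<lambda>x y. b x y + stringvec n i m x y) = (\<lambda>j. wtB n b j - simple_root n i j)"
    and "wtB n (\<lambda>x y. b x y - stringvec n i m x y) = (\<lambda>j. wtB n b j + simple_root n i j)"
proof -
  have A: "(\<Sum>(s,t)\<in>Iset n. (b s t + stringvec n i m s t) * cartanA j t) =
     (\<Sum>(s,t)\<in>Iset n. b s t * cartanA j t) + (\<Sum>(s,t)\<in>Iset n. stringvec n i m s t * cartanA j t)" for j
    by (simp add: split_def distrib_right sum.distrib)
  have B: "(\<Sum>(s,t)\<in>Iset n. (b s t - stringvec n i m s t) * cartanA j t) =
     (\<Sum>(s,t)\<in>Iset n. b s t * cartanA j t) - (\<Sum>(s,t)\<in>Iset n. stringvec n i m s t * cartanA j t)" for j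
    by (simp add: split_def left_diff_distrib sum_subtractf)
  show "wtB n (\<lambda>x y. b x y + stringvec n i m x y) = (\<lambda>j. wtB n b j - simple_root n i j)"
    unfolding wtB_def simple_root_def using A sv_sum[OF assms] by (auto simp: fun_eq_iff)
  show "wtB n (\<lambda>x y. b x y - stringvec n i m x y) = (\<lambda>j. wtB n b j + simple_root n i j)"
    unfolding wtB_def simple_root_def using B sv_sum[OF assms] by (auto simp: fun_eq_iff)
qed

lemma f_props:
  assumes b: "b \<in> Binf n" and i: "1 \<le> i" "i \<le> n"
  defines "m \<equiv> mstar n i b"
  defines "b' \<equiv> (\<lambda>x y. b x y + stringvec n i m x y)"
  shows "b' \<in> Binf n" "epsstar n i b' = epsstar n i b + 1" "Mstar n i b' = m"
    "wtB n b' = (\<lambda>j. wtB n b j - simple_root n i j)"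
proof -
  let ?E = "epsstar n i b"
  have sb: "supp0 n b" using b by (rule Binf_supp)
  have m: "m \<in> {1..i}" "Sigstar n i b m = ?E" "\<And>k. k < m \<Longrightarrow> k \<in> {1..i} \<Longrightarrow> Sigstar n i b k < ?E"
    using eps_facts[OF i(1), where n=n and b=b] unfolding m_def by auto
  have le: "\<And>k. k \<in> {1..i} \<Longrightarrow> Sigstar n i b k \<le> ?E" using eps_facts(1)[OF i(1)] by auto
  have Sh: "\<And>k. k \<in> {1..i} \<Longrightarrow> Sigstar n i b' k = Sigstar n i b k + (if k \<le> m then 1 else 0) + (if k < m then 1 else 0)"
    unfolding b'_def using Sig_shift(1)[OF sb i] m(1) by auto
  have Sc: "\<And>k. k \<le> i \<Longrightarrow> Sigstar n i b k = b k (i+1-k) - b k (i-k)" using Sig_closed[OF sb] by auto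
  have hlp: "b s (i-s) \<ge> b m (i-m) + 1" if "1 \<le> s" "s < m" for s
  proof -
    have "Sigstar n i b s < Sigstar n i b m" using m that by auto
    moreover have "b m (i+1-m) \<le> b s (i+1-s)" using chain[OF b i(2) that(1), of m] that m(1) by auto
    ultimately show ?thesis using Sc[of s] Sc[of m] that m(1) by auto
  qed
  show "b' \<in> Binf n"
    unfolding Binf_def mem_Collect_eq
  proof (intro conjI allI impI)
    fix s t assume "(s,t) \<notin> Iset n"
    then show "b' s t = 0" using sb sv_out[OF i, of m s t] m(1) by (auto simp: b'_def supp0_def)
  next
    fix s t assume st: "(s,t) \<in> Iset n"
    show "0 \<le> b' s t"
    proof (cases "1 \<le> s \<and> s < m \<and> s + t = i")
      case True
      then have "t = i - s" by auto
      then show ?thesis using hlp[of s] True Binf_nonneg[OF b, of m "i-m"] m(1)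
        by (auto simp: b'_def sv_closed[OF i])
    next
      case False
      then show ?thesis using Binf_nonneg[OF b, of s t] m(1) by (auto simp: b'_def sv_closed[OF i])
    qed
  next
    fix k s assume ks: "1 \<le> k \<and> k \<le> n \<and> 1 \<le> s \<and> s < k"
    have B0: "b s (k+1-s) \<ge> b (s+1) (k-s)" using b ks by (auto simp: Binf_def)
    have e1: "s + (k+1-s) = k+1" "Suc s + (k - s) = k+1" using ks by auto
    show "b' (s+1) (k-s) \<le> b' s (k+1-s)"
    proof (cases "k + 1 = i \<and> s + 1 = m")
      case True
      then have "k+1-s = i - s" "k - s = i - m" by auto
      then show ?thesis using hlp[of s] True ks m(1) by (auto simp: b'_def sv_closed[OF i])
    next
      case False
      then show ?thesis using B0 ks m(1) e1 by (auto simp: b'_def sv_closed[OF i])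
    qed
  qed
  show E': "epsstar n i b' = ?E + 1"
  proof (rule eps_char[of m])
    show "m \<in> {1..i}" by (rule m(1))
    show "Sigstar n i b' m = ?E + 1" using Sh[OF m(1)] m(2) by simp
    fix k assume k: "k \<in> {1..i}"
    show "Sigstar n i b' k \<le> ?E + 1"
      using Sh[OF k] le[OF k] m(3)[of k] k by (cases "k < m") auto
  qed
  show "Mstar n i b' = m"
  proof (rule M_char[OF E' m(1)])
    show "Sigstar n i b' m = ?E + 1" using Sh[OF m(1)] m(2) by simp
    fix k assume k: "k \<in> {1..i}" "m < k"
    show "Sigstar n i b' k < ?E + 1" using Sh[OF k(1)] le[OF k(1)] k by auto
  qed
  show "wtB n b' = (\<lambda>j. wtB n b j - simple_root n i j)"
    unfolding b'_def using wt_shift(1)[OF i] m(1) by auto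
qed

lemma e_props:
  assumes b: "b \<in> Binf n" and i: "1 \<le> i" "i \<le> n" and pos: "epsstar n i b > 0"
  defines "M \<equiv> Mstar n i b"
  defines "b' \<equiv> (\<lambda>x y. b x y - stringvec n i M x y)"
  shows "b' \<in> Binf n" "epsstar n i b' = epsstar n i b - 1" "mstar n i b' = M"
    "wtB n b' = (\<lambda>j. wtB n b j + simple_root n i j)"
proof -
  let ?E = "epsstar n i b"
  have sb: "supp0 n b" using b by (rule Binf_supp)
  have M: "M \<in> {1..i}" "Sigstar n i b M = ?E" "\<And>k. M < k \<Longrightarrow> k \<in> {1..i} \<Longrightarrow> Sigstar n i b k < ?E"
    using eps_facts[OF i(1), where n=n and b=b] unfolding M_def by auto
  have le: "\<And>k. k \<in> {1..i} \<Longrightarrow> Sigstar n i b k \<le> ?E" using eps_facts(1)[OF i(1)] by auto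
  have Sh: "\<And>k. k \<in> {1..i} \<Longrightarrow> Sigstar n i b' k = Sigstar n i b k - (if k \<le> M then 1 else 0) - (if k < M then 1 else 0)"
    unfolding b'_def using Sig_shift(2)[OF sb i] M(1) by auto
  have Sc: "\<And>k. k \<le> i \<Longrightarrow> Sigstar n i b k = b k (i+1-k) - b k (i-k)" using Sig_closed[OF sb] by auto
  have xM: "b M (i+1-M) \<ge> 1" using Sc[of M] M pos Binf_nonneg[OF b, of M "i-M"] by auto
  have hlp1: "b s (i+1-s) \<ge> 1" if "1 \<le> s" "s \<le> M" for s
    using chain[OF b i(2) that(1), of M] that M(1) xM by auto
  have hlp2: "b M (i+1-M) \<ge> b (M+1) (i-M) + 1" if "M < i"
  proof -
    have "Sigstar n i b (M+1) < Sigstar n i b M" using M that by auto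
    moreover have "b (M+1) (i-(M+1)) \<le> b M (i-M)" using ydiag[OF b i(2), of M] M(1) that by auto
    ultimately show ?thesis using Sc[of M] Sc[of "M+1"] that M(1) by auto
  qed
  show "b' \<in> Binf n"
    unfolding Binf_def mem_Collect_eq
  proof (intro conjI allI impI)
    fix s t assume "(s,t) \<notin> Iset n"
    then show "b' s t = 0" using sb sv_out[OF i, of M s t] M(1) by (auto simp: b'_def supp0_def)
  next
    fix s t assume st: "(s,t) \<in> Iset n"
    show "0 \<le> b' s t"
    proof (cases "1 \<le> s \<and> s \<le> M \<and> s + t = i + 1")
      case True
      then have "t = i + 1 - s" by auto
      then show ?thesis using hlp1[of s] True M(1)
        by (auto simp: b'_def sv_closed[OF i])
    next
      case False
      then show ?thesis using Binf_nonneg[OF b, of s t] M(1) by (auto simp: b'_def sv_closed[OF i])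
    qed
  next
    fix k s assume ks: "1 \<le> k \<and> k \<le> n \<and> 1 \<le> s \<and> s < k"
    have B0: "b s (k+1-s) \<ge> b (s+1) (k-s)" using b ks by (auto simp: Binf_def)
    have e1: "s + (k+1-s) = k+1" "Suc s + (k - s) = k+1" using ks by auto
    show "b' (s+1) (k-s) \<le> b' s (k+1-s)"
    proof (cases "k = i \<and> s = M")
      case True
      then have "k+1-s = i + 1 - M" "k - s = i - M" by auto
      then show ?thesis using hlp2 True ks M(1) by (auto simp: b'_def sv_closed[OF i])
    next
      case False
      then show ?thesis using B0 ks M(1) e1 by (auto simp: b'_def sv_closed[OF i])
    qed
  qed
  show E': "epsstar n i b' = ?E - 1"
  proof (rule eps_char[of M])
    show "M \<in> {1..i}" by (rule M(1))
    show "Sigstar n i b' M = ?E - 1" using Sh[OF M(1)] M(2) by simp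
    fix k assume k: "k \<in> {1..i}"
    show "Sigstar n i b' k \<le> ?E - 1"
      using Sh[OF k] le[OF k] M(3)[of k] k by (cases "M < k") auto
  qed
  show "mstar n i b' = M"
  proof (rule m_char[OF E' M(1)])
    show "Sigstar n i b' M = ?E - 1" using Sh[OF M(1)] M(2) by simp
    fix k assume k: "k \<in> {1..i}" "k < M"
    show "Sigstar n i b' k < ?E - 1" using Sh[OF k(1)] le[OF k(1)] k by auto
  qed
  show "wtB n b' = (\<lambda>j. wtB n b j + simple_root n i j)"
    unfolding b'_def using wt_shift(2)[OF i] M(1) by auto
qed

lemma fstar_eq: "fstar n i b = Some (\<lambda>x y. b x y + stringvec n i (mstar n i b) x y)"
  by (simp add: fstar_def)

lemma estar_eq: "epsstar n i b > 0 \<Longrightarrow> estar n i b = Some (\<lambda>x y. b x y - stringvec n i (Mstar n i b) x y)"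
  by (simp add: estar_def)

lemma estar_None: "\<not> epsstar n i b > 0 \<Longrightarrow> estar n i b = None"
  by (simp add: estar_def)

lemma fe_inv:
  assumes "b \<in> Binf n" "1 \<le> i" "i \<le> n"
  shows "estar n i (\<lambda>x y. b x y + stringvec n i (mstar n i b) x y) = Some b"
proof -
  have "epsstar n i (\<lambda>x y. b x y + stringvec n i (mstar n i b) x y) > 0"
    using f_props(2)[OF assms] eps_nonneg[OF assms] by simp
  then show ?thesis using f_props(3)[OF assms] by (simp add: estar_eq)
qed

lemma ef_inv:
  assumes "b \<in> Binf n" "1 \<le> i" "i \<le> n" "epsstar n i b > 0"
  shows "fstar n i (\<lambda>x y. b x y - stringvec n i (Mstar n i b) x y) = Some b"
  using e_props(3)[OF assms] by (simp add: fstar_eq)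

lemma e_iter:
  assumes "b \<in> Binf n" "1 \<le> i" "i \<le> n"
  shows "(apply_ops (estar n) (replicate k i) b \<noteq> None) = (int k \<le> epsstar n i b)"
  using assms(1)
proof (induction k arbitrary: b)
  case 0
  then show ?case using eps_nonneg[OF _ assms(2,3)] by simp
next
  case (Suc k)
  show ?case
  proof (cases "epsstar n i b > 0")
    case True
    have "apply_ops (estar n) (replicate (Suc k) i) b = apply_ops (estar n) (replicate k i) (\<lambda>x y. b x y - stringvec n i (Mstar n i b) x y)"
      using True by (simp add: estar_eq)
    then show ?thesis using Suc.IH[OF e_props(1)[OF Suc.prems assms(2,3) True]] e_props(2)[OF Suc.prems assms(2,3) True]
      by simp (auto)
  next
    case False
    then show ?thesis by (simp add: estar_None)
  qed
qed

definition Nsum :: "nat \<Rightarrow> (nat \<Rightarrow> nat \<Rightarrow> int) \<Rightarrow> int" where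
  "Nsum n b = (\<Sum>(s,t)\<in>Iset n. b s t)"

lemma Nsum_e:
  assumes "1 \<le> i" "i \<le> n" "1 \<le> m" "m \<le> i"
  shows "Nsum n (\<lambda>x y. b x y - stringvec n i m x y) = Nsum n b - 1"
proof -
  have "(\<Sum>(s,t)\<in>Iset n. b s t - stringvec n i m s t) = (\<Sum>(s,t)\<in>Iset n. b s t) - (\<Sum>(s,t)\<in>Iset n. stringvec n i m s t * 1)"
    by (simp add: split_def sum_subtractf)
  then show ?thesis using sv_sum[OF assms, of "\<lambda>_. 1"] by (simp add: Nsum_def)
qed

lemma exists_pos:
  assumes b: "b \<in> Binf n" and nz: "b \<noteq> (\<lambda>x y. 0)"
  shows "\<exists>i\<in>{1..n}. epsstar n i b > 0"
proof -
  obtain s t where st: "b s t \<noteq> 0" using nz by (meson ext)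
  then have stI: "(s,t) \<in> Iset n" using b by (auto simp: Binf_def)
  then have "b s ((s+t-1)+1-s) \<le> b 1 ((s+t-1)+1-1)"
    using chain[OF b, of "s+t-1" 1 s] by (auto simp: Iset_def)
  moreover have "(s+t-1)+1-s = t" using stI by (auto simp: Iset_def)
  ultimately have "b 1 (s+t-1) > 0" using st Binf_nonneg[OF b, of s t] by simp
  then have ex: "\<exists>k. b 1 k > 0" by blast
  define i where "i = (LEAST k. b 1 k > 0)"
  have bi: "b 1 i > 0" unfolding i_def using LeastI_ex[OF ex] .
  have bl: "b 1 k \<le> 0" if "k < i" for k using not_less_Least[of k "\<lambda>k. b 1 k > 0"] that unfolding i_def by simp
  have iI: "(1,i) \<in> Iset n" using bi b by (cases "(1,i) \<in> Iset n") (auto simp: Binf_def)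
  then have i: "1 \<le> i" "i \<le> n" by (auto simp: Iset_def)
  have "b 1 (i-1) = 0" using bl[of "i-1"] i Binf_nonneg[OF b, of 1 "i-1"] by simp
  then have "Sigstar n i b 1 > 0" using Sig_closed[OF Binf_supp[OF b], of 1 i] i bi by simp
  then have "epsstar n i b > 0" using eps_facts(1)[OF i(1), of 1 n b] i by simp
  then show ?thesis using i by auto
qed

lemma reach:
  assumes "b \<in> Binf n" "Nsum n b = int N"
  shows "\<exists>ops. set ops \<subseteq> {1..n} \<and> apply_ops (estar n) ops b = Some (\<lambda>x y. 0)"
  using assms
proof (induction N arbitrary: b)
  case 0
  have "\<forall>p\<in>Iset n. (\<lambda>(s,t). b s t) p = 0"
    using 0 Binf_nonneg[OF 0(1)] finite_Iset
    by (subst sum_nonneg_eq_0_iff[symmetric]) (auto simp: Nsum_def split_def)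
  then have "b = (\<lambda>x y. 0)"
  proof (intro ext)
    fix x y assume h: "\<forall>p\<in>Iset n. (\<lambda>(s,t). b s t) p = 0"
    show "b x y = 0" using h[rule_format, of "(x,y)"] 0(1) by (cases "(x,y) \<in> Iset n") (auto simp: Binf_def)
  qed
  then show ?case by (intro exI[of _ "[]"]) simp
next
  case (Suc N)
  have "b \<noteq> (\<lambda>x y. 0)" using Suc.prems by (auto simp: Nsum_def)
  then obtain i where i: "i \<in> {1..n}" "epsstar n i b > 0" using exists_pos[OF Suc.prems(1)] by blast
  have i': "1 \<le> i" "i \<le> n" using i by auto
  define b' where "b' = (\<lambda>x y. b x y - stringvec n i (Mstar n i b) x y)"
  have b'B: "b' \<in> Binf n" unfolding b'_def by (rule e_props(1)[OF Suc.prems(1) i' i(2)])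
  have "Mstar n i b \<in> {1..i}" using eps_facts(5)[OF i'(1)] by auto
  then have "Nsum n b' = int N" unfolding b'_def using Nsum_e[OF i', of "Mstar n i b" b] Suc.prems by simp
  then obtain ops where ops: "set ops \<subseteq> {1..n}" "apply_ops (estar n) ops b' = Some (\<lambda>x y. 0)"
    using Suc.IH[OF b'B] by blast
  have "apply_ops (estar n) (i # ops) b = Some (\<lambda>x y. 0)"
    using ops(2) i(2) by (simp add: estar_eq b'_def)
  then show ?case using ops(1) i(1) by (intro exI[of _ "i # ops"]) auto
qed

theorem proposition6p1:
  fixes n :: nat
  assumes "n \<ge> 1"
  shows "highest_weight_crystal n (Binf n) (wtB n) (estar n) (fstar n)
           (\<lambda>i b. ereal (of_int (epsstar n i b))) (\<lambda>i b. ereal (of_int (phistar n i b)))"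
  unfolding highest_weight_crystal_def
proof (intro conjI)
  show "crystal n (Binf n) (wtB n) (estar n) (fstar n)
           (\<lambda>i b. ereal (of_int (epsstar n i b))) (\<lambda>i b. ereal (of_int (phistar n i b)))"
    unfolding crystal_def
  proof (intro conjI ballI)
    fix b assume "b \<in> Binf n"
    show "\<forall>j. j \<notin> {1..n} \<longrightarrow> wtB n b j = 0" unfolding wtB_def by auto
  next
    fix i b assume i: "i \<in> {1..n}" and b: "b \<in> Binf n"
    have i': "1 \<le> i" "i \<le> n" using i by auto
    show "estar n i b = None \<or> the (estar n i b) \<in> Binf n"
      using e_props(1)[OF b i'] by (cases "epsstar n i b > 0") (auto simp: estar_eq estar_None)
    show "fstar n i b = None \<or> the (fstar n i b) \<in> Binf n"
      using f_props(1)[OF b i'] by (simp add: fstar_eq)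
    show "ereal (of_int (epsstar n i b)) \<noteq> \<infinity>" "ereal (of_int (phistar n i b)) \<noteq> \<infinity>" by simp_all
    show "ereal (of_int (phistar n i b)) = ereal (of_int (epsstar n i b)) + ereal (of_int (wtB n b i))"
      by (simp add: phistar_def)
    show "ereal (of_int (epsstar n i b)) = - \<infinity> \<longrightarrow> estar n i b = None \<and> fstar n i b = None" by simp
    show "\<forall>b'. estar n i b = Some b' \<longrightarrow>
        wtB n b' = (\<lambda>j. wtB n b j + simple_root n i j) \<and>
        ereal (of_int (epsstar n i b')) = ereal (of_int (epsstar n i b)) - 1 \<and>
        ereal (of_int (phistar n i b')) = ereal (of_int (phistar n i b)) + 1"
    proof (intro allI impI)
      fix b'
      assume e: "estar n i b = Some b'"
      then have pos: "epsstar n i b > 0" by (cases "epsstar n i b > 0") (auto simp: estar_None)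
      then have b': "b' = (\<lambda>x y. b x y - stringvec n i (Mstar n i b) x y)" using e by (simp add: estar_eq)
      have w: "wtB n b' = (\<lambda>j. wtB n b j + simple_root n i j)" using e_props(4)[OF b i' pos] b' by simp
      have ep: "epsstar n i b' = epsstar n i b - 1" using e_props(2)[OF b i' pos] b' by simp
      have "simple_root n i i = 2" using i by (simp add: simple_root_def cartanA_def)
      then show "wtB n b' = (\<lambda>j. wtB n b j + simple_root n i j) \<and>
        ereal (of_int (epsstar n i b')) = ereal (of_int (epsstar n i b)) - 1 \<and>
        ereal (of_int (phistar n i b')) = ereal (of_int (phistar n i b)) + 1"
        using w ep by (simp add: phistar_def one_ereal_def)
    qed
    show "\<forall>b'. fstar n i b = Some b' \<longrightarrow>
        wtB n b' = (\<lambda>j. wtB n b j - simple_root n i j) \<and>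
        ereal (of_int (epsstar n i b')) = ereal (of_int (epsstar n i b)) + 1 \<and>
        ereal (of_int (phistar n i b')) = ereal (of_int (phistar n i b)) - 1"
    proof (intro allI impI)
      fix b'
      assume f: "fstar n i b = Some b'"
      then have b': "b' = (\<lambda>x y. b x y + stringvec n i (mstar n i b) x y)" by (simp add: fstar_eq)
      have w: "wtB n b' = (\<lambda>j. wtB n b j - simple_root n i j)" using f_props(4)[OF b i'] b' by simp
      have ep: "epsstar n i b' = epsstar n i b + 1" using f_props(2)[OF b i'] b' by simp
      have "simple_root n i i = 2" using i by (simp add: simple_root_def cartanA_def)
      then show "wtB n b' = (\<lambda>j. wtB n b j - simple_root n i j) \<and>
        ereal (of_int (epsstar n i b')) = ereal (of_int (epsstar n i b)) + 1 \<and>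
        ereal (of_int (phistar n i b')) = ereal (of_int (phistar n i b)) - 1"
        using w ep by (simp add: phistar_def one_ereal_def)
    qed
    fix b' assume b'B: "b' \<in> Binf n"
    show "(fstar n i b = Some b') = (estar n i b' = Some b)"
    proof
      assume "fstar n i b = Some b'"
      then have "b' = (\<lambda>x y. b x y + stringvec n i (mstar n i b) x y)" by (simp add: fstar_eq)
      then show "estar n i b' = Some b" using fe_inv[OF b i'] by simp
    next
      assume e: "estar n i b' = Some b"
      then have pos: "epsstar n i b' > 0" by (cases "epsstar n i b' > 0") (auto simp: estar_None)
      then have "b = (\<lambda>x y. b' x y - stringvec n i (Mstar n i b') x y)" using e by (simp add: estar_eq)
      then show "fstar n i b = Some b'" using ef_inv[OF b'B i' pos] by simp
    qed
  qed
next
  have z: "(\<lambda>x y. 0::int) \<in> Binf n" by (simp add: Binf_def)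
  show "\<exists>b0\<in>Binf n. \<forall>b\<in>Binf n. \<exists>is. set is \<subseteq> {1..n} \<and> apply_ops (estar n) is b = Some b0"
  proof (intro bexI[OF _ z] ballI)
    fix b assume b: "b \<in> Binf n"
    have "Nsum n b \<ge> 0" using Binf_nonneg[OF b] by (simp add: Nsum_def split_def sum_nonneg)
    then obtain N where "Nsum n b = int N" using nonneg_int_cases by blast
    then show "\<exists>ops. set ops \<subseteq> {1..n} \<and> apply_ops (estar n) ops b = Some (\<lambda>x y. 0)" using reach[OF b] by blast
  qed
next
  show "\<forall>b\<in>Binf n. \<forall>i\<in>{1..n}. \<exists>m::nat.
        apply_ops (estar n) (replicate m i) b \<noteq> None \<and>
        (\<forall>k. apply_ops (estar n) (replicate k i) b \<noteq> None \<longrightarrow> k \<le> m) \<and>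
        ereal (of_int (epsstar n i b)) = ereal (of_nat m)"
  proof (intro ballI)
    fix b i assume b: "b \<in> Binf n" and i: "i \<in> {1..n}"
    have i': "1 \<le> i" "i \<le> n" using i by auto
    have e0: "epsstar n i b \<ge> 0" by (rule eps_nonneg[OF b i'])
    show "\<exists>m::nat. apply_ops (estar n) (replicate m i) b \<noteq> None \<and>
        (\<forall>k. apply_ops (estar n) (replicate k i) b \<noteq> None \<longrightarrow> k \<le> m) \<and>
        ereal (of_int (epsstar n i b)) = ereal (of_nat m)"
    proof (intro exI[of _ "nat (epsstar n i b)"] conjI allI impI)
      show "apply_ops (estar n) (replicate (nat (epsstar n i b)) i) b \<noteq> None"
        using e_iter[OF b i'] e0 by simp
      fix k assume "apply_ops (estar n) (replicate k i) b \<noteq> None"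
      then show "k \<le> nat (epsstar n i b)" using e_iter[OF b i'] by simp
    next
      show "ereal (of_int (epsstar n i b)) = ereal (of_nat (nat (epsstar n i b)))" using e0 by simp
    qed
  qed
qed

end
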